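(* In the two-tier residency matching game described in the context with $v\ge e/(e-1)$, consider the variant in which high-tier doctors submit lists of length $K\ge 1$ and low-tier doctors submit lists of length $1$. Under the large market approximation, the social welfare of the symmetric equilibrium of this variant is at least $\frac{e}{2(e-1)}$ times the social welfare of SIMPLE.
   Context: Model: there are $n$ high-tier and $rn$ low-tier doctors ($r>0$), and $n$ high-tier and $rn$ low-tier hospitals, each with one position. Every hospital prefers every high doctor to every low doctor and every doctor prefers every high hospital to every low hospital; within a tier, preferences are independent uniformly random permutations. Each doctor submits a ranked list of hospitals of the allowed length $L$: a strategy $(k,L-k)$ lists his $k$ most preferred high hospitals followed by his $L-k$ most preferred low hospitals. Hospitals submit full true rankings; doctor-proposing deferred acceptance is run. Values: a doctor gets $v>1$ if matched to a high hospital, $1$ if matched to a low one, $0$ if unmatched; a hospital gets $v$ from a high doctor, $1$ from a low doctor, $0$ if unfilled; social welfare is the sum of all agents' values. Large market approximation: $n\to\infty$ with $r,K,v$ fixed; each application is accepted independently with a probability determined by the aggregate strategy profile via fixed-point equations (expected matched doctors = expected hospitals receiving at least one admissible application; a hospital receiving on average $\lambda$ applications gets none with probability $e^{-\lambda}$; low doctors' applications to hospitals already taken by high doctors are rejected). Equilibrium: symmetric Nash equilibrium (all doctors of a tier use the same, possibly mixed, strategy, each maximizing expected value given the acceptance probabilities). SIMPLE: the outcome when every doctor submits a single application to his most preferred hospital in his own tier; its welfare is $2(v+r)n(1-1/e)$. *)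

theory Defs
  imports "HOL-Analysis.Analysis"
begin

text \<open>Large market approximation of the two-tier residency matching game, variant in which
  high-tier doctors submit lists of length K and low-tier doctors lists of length 1.
  All quantities are per n (there are n high doctors/hospitals and r*n low ones).\<close>

text \<open>Acceptance probability when a hospital receives on average x applications:
  fraction of hospitals receiving at least one application, (1 - e^{-x}), divided by the
  average number of applications x (limit value 1 at x = 0).\<close>
definition accept :: "real \<Rightarrow> real" where
  "accept x = (if x = 0 then 1 else (1 - exp (- x)) / x)"

text \<open>Expected number of applications a doctor sends among m listed hospitals of a tier,
  each accepted independently with probability p (he stops at the first acceptance).\<close>
definition napps :: "real \<Rightarrow> nat \<Rightarrow> real" where
  "napps p m = (\<Sum>j<m. (1 - p) ^ j)"

text \<open>Average number of applications per high hospital from high doctors, when a high doctor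
  plays (k, K-k) with probability sigma k and high-tier applications are accepted w.p. pH.\<close>
definition lamH :: "nat \<Rightarrow> (nat \<Rightarrow> real) \<Rightarrow> real \<Rightarrow> real" where
  "lamH K \<sigma> pH = (\<Sum>k\<le>K. \<sigma> k * napps pH k)"

text \<open>Average number of applications per low hospital from high doctors (rejected in the high
  tier), with r n low hospitals and low-tier acceptance probability pL.\<close>
definition muL :: "real \<Rightarrow> nat \<Rightarrow> (nat \<Rightarrow> real) \<Rightarrow> real \<Rightarrow> real \<Rightarrow> real" where
  "muL r K \<sigma> pH pL = (\<Sum>k\<le>K. \<sigma> k * (1 - pH) ^ k * napps pL (K - k)) / r"

definition UH :: "real \<Rightarrow> nat \<Rightarrow> real \<Rightarrow> real \<Rightarrow> nat \<Rightarrow> real" where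
  "UH v K pH pL k = v * (1 - (1 - pH) ^ k) + (1 - pH) ^ k * (1 - (1 - pL) ^ (K - k))"

text \<open>Low doctors play (1,0) (apply to top high hospital) w.p. q and (0,1) w.p. 1-q.
  A low doctor's application to a high hospital is admissible only if the hospital is not taken
  by a high doctor (probability e^{-lamH}); untaken high hospitals receive on average q r low
  applications. Low hospitals untaken by high doctors (probability e^{-muL}) receive on average
  1 - q low applications.\<close>
definition accLH :: "real \<Rightarrow> real \<Rightarrow> real \<Rightarrow> real" where
  "accLH r lam q = exp (- lam) * accept (q * r)"

definition accLL :: "real \<Rightarrow> real \<Rightarrow> real" where
  "accLL mu q = exp (- mu) * accept (1 - q)"

definition is_equilibrium ::
  "real \<Rightarrow> real \<Rightarrow> nat \<Rightarrow> (nat \<Rightarrow> real) \<Rightarrow> real \<Rightarrow> real \<Rightarrow> real \<Rightarrow> bool" where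
  "is_equilibrium r v K \<sigma> q pH pL \<longleftrightarrow>
     (\<forall>k\<le>K. 0 \<le> \<sigma> k) \<and> (\<Sum>k\<le>K. \<sigma> k) = 1 \<and> 0 \<le> q \<and> q \<le> 1 \<and>
     0 < pH \<and> pH \<le> 1 \<and> 0 < pL \<and> pL \<le> 1 \<and>
     pH = accept (lamH K \<sigma> pH) \<and>
     pL = accept (muL r K \<sigma> pH pL) \<and>
     (\<forall>k\<le>K. 0 < \<sigma> k \<longrightarrow> (\<forall>k'\<le>K. UH v K pH pL k' \<le> UH v K pH pL k)) \<and>
     (0 < q \<longrightarrow> accLL (muL r K \<sigma> pH pL) q \<le> v * accLH r (lamH K \<sigma> pH) q) \<and>
     (q < 1 \<longrightarrow> v * accLH r (lamH K \<sigma> pH) q \<le> accLL (muL r K \<sigma> pH pL) q)"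

text \<open>Social welfare (sum of all agents' values) in the large-market approximation.
  High-high match: 2v; low doctor in high hospital or high doctor in low hospital: v + 1;
  low-low match: 2.\<close>
definition welfare ::
  "nat \<Rightarrow> real \<Rightarrow> real \<Rightarrow> nat \<Rightarrow> (nat \<Rightarrow> real) \<Rightarrow> real \<Rightarrow> real \<Rightarrow> real \<Rightarrow> real" where
  "welfare n r v K \<sigma> q pH pL =
     (let lam = lamH K \<sigma> pH; mu = muL r K \<sigma> pH pL in
      real n * (2 * v * (1 - exp (- lam))
              + (v + 1) * (exp (- lam) * (1 - exp (- (q * r))))
              + (v + 1) * (r * (1 - exp (- mu)))
              + 2 * (r * exp (- mu) * (1 - exp (- (1 - q))))))"

definition simple_welfare :: "nat \<Rightarrow> real \<Rightarrow> real \<Rightarrow> real" where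
  "simple_welfare n r v = 2 * (v + r) * real n * (1 - 1 / exp 1)"

end

theory Submission
  imports Defs
begin

lemma accept_nonneg: "0 \<le> x \<Longrightarrow> 0 \<le> accept x"
  unfolding accept_def by (auto simp: divide_nonneg_pos)

lemma accept_mul: "0 \<le> x \<Longrightarrow> 1 - exp (- x) = x * accept x"
  unfolding accept_def by auto

lemma accept_lower1: assumes "0 \<le> s" shows "1 \<le> accept s * (1 + s)"
proof (cases "s = 0")
  case True then show ?thesis by (simp add: accept_def)
next
  case False
  hence sp: "s > 0" using assms by auto
  have "1 + s \<le> exp s" by (rule exp_ge_add_one_self)
  hence "exp (-s) * (1 + s) \<le> exp (-s) * exp s" by (simp)
  hence "exp (-s) * (1 + s) \<le> 1" by (simp add: exp_minus field_simps)
  hence "s \<le> (1 - exp (-s)) * (1 + s)" by (simp add: algebra_simps)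
  thus ?thesis using sp False by (simp add: accept_def field_simps)
qed

lemma exp_strict: fixes x :: real assumes "x \<noteq> 0" "-2 < x" shows "1 + x < exp x"
proof -
  have "1 + x/2 \<le> exp (x/2)" by (rule exp_ge_add_one_self)
  moreover have "0 \<le> 1 + x/2" using assms by auto
  ultimately have "(1 + x/2)^2 \<le> (exp (x/2))^2" by (intro power_mono) auto
  also have "(exp (x/2))^2 = exp x" by (simp add: power2_eq_square exp_add[symmetric])
  finally have "(1 + x/2)^2 \<le> exp x" .
  moreover have xx: "0 < x * x" using assms(1) by (cases "x > 0") (auto intro: mult_neg_neg)
  moreover have "1 + x < (1 + x/2)^2" using xx by (simp add: power2_eq_square field_simps)
  ultimately show ?thesis by linarith
qed

lemma accept_lt1: assumes "0 \<le> x" "x < 1" shows "1 - exp (-1) < accept x"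
proof (cases "x = 0")
  case True
  have "0 < exp (-1::real)" by simp
  then show ?thesis using True by (simp add: accept_def)
next
  case False
  hence xp: "x > 0" using assms by auto
  have i1: "exp (-x) * (1 + x) < 1"
  proof -
    have "1 + x < exp x" using exp_strict xp by auto
    hence "exp (-x) * (1 + x) < exp (-x) * exp x" by simp
    thus ?thesis by (simp add: exp_add[symmetric])
  qed
  have i2: "exp (-x) * x < exp (-1)"
  proof -
    have "1 + (-(1-x)) < exp (-(1-x))" using exp_strict[of "-(1-x)"] assms xp by auto
    hence "exp (-x) * x < exp (-x) * exp (-(1-x))" using assms by simp
    thus ?thesis by (simp add: exp_add[symmetric])
  qed
  have "exp (-x) = (1 - x) * (exp (-x) * (1 + x)) + x * (exp (-x) * x)"
    by (simp add: algebra_simps power2_eq_square)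
  also have "\<dots> < (1 - x) * 1 + x * exp (-1)"
    using i1 i2 assms xp by (intro add_less_le_mono mult_strict_left_mono mult_left_mono) auto
  finally have "x * (1 - exp (-1)) < 1 - exp (-x)" by (simp add: algebra_simps)
  thus ?thesis using xp False by (simp add: accept_def field_simps)
qed

lemma core:
  fixes A M q r v a1 a2 :: real
  assumes "0 < A" "A \<le> exp (-1)" "0 < M" "M \<le> 1" "0 \<le> q" "q \<le> 1" "0 < r" "1 \<le> v"
    and a1: "0 \<le> a1" and a2: "0 \<le> a2" "1 \<le> a2 * (1 + (1 - q))"
    and c: "q * (M * a2) \<le> q * (v * A * a1)"
  shows "v + r \<le> 2 * v * (1 - A) + (v + 1) * (A * (q * r * a1)) + (v + 1) * (r * (1 - M))
     + 2 * (r * M * ((1 - q) * a2))"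
proof -
  have e2: "exp (-1::real) < 1/2"
  proof -
    have "(2::real) < exp 1" using exp_strict[of 1] by simp
    thus ?thesis by (simp add: exp_minus field_simps)
  qed
  have h1: "0 \<le> v * (1 - 2 * A)" using assms e2 by auto
  have h2: "r * (q * (M * a2)) \<le> (v + 1) * (A * (q * r * a1))"
  proof -
    have "r * (q * (M * a2)) \<le> r * (q * (v * A * a1))" using mult_left_mono[OF c] assms by auto
    also have "\<dots> \<le> (v + 1) * (A * (q * r * a1))"
      using assms by (simp add: algebra_simps mult_nonneg_nonneg)
    finally show ?thesis .
  qed
  have h3: "2 * (r * (1 - M)) \<le> (v + 1) * (r * (1 - M))"
    using assms by (intro mult_right_mono) auto
  have h4: "r * M \<le> r * M * (a2 * (1 + (1 - q)))"
    using assms a2 by (simp add: mult_left_mono)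
  have h5: "0 \<le> r * (1 - M)" using assms by auto
  show ?thesis using h1 h2 h3 h4 h5 by (simp add: algebra_simps)
qed

lemma napps_nonneg: "0 \<le> p \<Longrightarrow> p \<le> 1 \<Longrightarrow> 0 \<le> napps p m"
  unfolding napps_def by (intro sum_nonneg) auto

lemma napps_ge1: assumes "0 \<le> p" "p \<le> 1" "1 \<le> m" shows "1 \<le> napps p m"
proof -
  obtain j where m: "m = Suc j" using assms by (cases m) auto
  have "napps p m = (\<Sum>i<j. (1 - p) ^ i) + (1 - p) ^ j" unfolding napps_def m by simp
  moreover have "0 \<le> (\<Sum>i<j. (1 - p) ^ i)" using assms by (intro sum_nonneg) auto
  moreover have "1 \<le> (\<Sum>i<Suc j. (1 - p) ^ i)"
    using assms by (simp add: lessThan_Suc_eq_insert_0 sum.reindex) (intro sum_nonneg, auto)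
  ultimately show ?thesis unfolding napps_def m by simp
qed

theorem lemma4:
  fixes n K :: nat and r v q pH pL :: real and \<sigma> :: "nat \<Rightarrow> real"
  assumes "0 < r" and "v \<ge> exp 1 / (exp 1 - 1)" and "K \<ge> 1"
    and "is_equilibrium r v K \<sigma> q pH pL"
  shows "welfare n r v K \<sigma> q pH pL \<ge> exp 1 / (2 * (exp 1 - 1)) * simple_welfare n r v"
proof -
  note eq = assms(4)[unfolded is_equilibrium_def]
  have sig: "\<And>k. k \<le> K \<Longrightarrow> 0 \<le> \<sigma> k" and sum1: "(\<Sum>k\<le>K. \<sigma> k) = 1"
    and q0: "0 \<le> q" and q1: "q \<le> 1" and pH0: "0 < pH" and pH1: "pH \<le> 1"
    and pL0: "0 < pL" and pL1: "pL \<le> 1"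
    and pHeq: "pH = accept (lamH K \<sigma> pH)"
    and best: "\<And>k k'. k \<le> K \<Longrightarrow> 0 < \<sigma> k \<Longrightarrow> k' \<le> K \<Longrightarrow> UH v K pH pL k' \<le> UH v K pH pL k"
    and cq: "0 < q \<longrightarrow> accLL (muL r K \<sigma> pH pL) q \<le> v * accLH r (lamH K \<sigma> pH) q"
    using eq by auto
  define lam where "lam = lamH K \<sigma> pH"
  define mu where "mu = muL r K \<sigma> pH pL"
  have e1: "1 < exp (1::real)" by simp
  have ee: "exp (1::real) / (exp 1 - 1) * (1 - exp (-1)) = 1"
    using e1 by (simp add: exp_minus field_simps)
  have v1: "1 \<le> v"
  proof -
    have "1 \<le> exp (1::real) / (exp 1 - 1)" using e1 by (simp add: field_simps)
    thus ?thesis using assms(2) by linarith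
  qed
  have lam0: "0 \<le> lam" unfolding lam_def lamH_def
    using sig pH0 pH1 by (intro sum_nonneg mult_nonneg_nonneg napps_nonneg) auto
  have mu0: "0 \<le> mu" unfolding mu_def muL_def using sig pH0 pH1 pL0 pL1 assms(1)
    by (intro divide_nonneg_pos sum_nonneg mult_nonneg_nonneg napps_nonneg) auto
  have lam1: "1 \<le> lam"
  proof (rule ccontr)
    assume "\<not> 1 \<le> lam"
    hence "lam < 1" by simp
    hence pHgt: "1 - exp (-1) < pH" using accept_lt1[of lam] lam0 pHeq lam_def by simp
    have "v * (1 - exp (-1)) \<ge> exp 1 / (exp 1 - 1) * (1 - exp (-1))"
      using assms(2) by (intro mult_right_mono) (auto simp: exp_minus field_simps)
    hence vge: "1 \<le> v * (1 - exp (-1))" using ee by linarith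
    have "v * (1 - exp (-1)) < v * pH" using pHgt v1 by simp
    also have "v * pH \<le> UH v K pH pL 1"
    proof -
      have "0 \<le> (1 - pH) * (1 - (1 - pL) ^ (K - 1))"
        using pH1 pL0 pL1 by (intro mult_nonneg_nonneg) (auto simp: power_le_one)
      thus ?thesis unfolding UH_def by simp
    qed
    finally have u1: "1 < UH v K pH pL 1" using vge by linarith
    have u0: "UH v K pH pL 0 \<le> 1" unfolding UH_def using pL0 pL1 by auto
    have "\<not> 0 < \<sigma> 0" using best[of 0 1] u1 u0 assms(3) by fastforce
    hence s0: "\<sigma> 0 = 0" using sig[of 0] by auto
    have "(\<Sum>k\<le>K. \<sigma> k) \<le> (\<Sum>k\<le>K. \<sigma> k * napps pH k)"
    proof (rule sum_mono)
      fix k assume k: "k \<in> {..K}"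
      show "\<sigma> k \<le> \<sigma> k * napps pH k"
      proof (cases "k = 0")
        case True thus ?thesis using s0 by simp
      next
        case False
        hence "1 \<le> napps pH k" using napps_ge1 pH0 pH1 by auto
        thus ?thesis using sig[of k] k by (simp add: mult_le_cancel_left1)
      qed
    qed
    hence "1 \<le> lam" using sum1 unfolding lam_def lamH_def by simp
    thus False using \<open>lam < 1\<close> by simp
  qed
  define A where "A = exp (- lam)"
  define M where "M = exp (- mu)"
  define a1 where "a1 = accept (q * r)"
  define a2 where "a2 = accept (1 - q)"
  have A0: "0 < A" and A1: "A \<le> exp (-1)" using lam1 unfolding A_def by auto
  have M0: "0 < M" and M1: "M \<le> 1" using mu0 unfolding M_def by auto
  have qr: "0 \<le> q * r" using q0 assms(1) by simp
  have a1p: "0 \<le> a1" unfolding a1_def using accept_nonneg qr by auto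
  have a2p: "0 \<le> a2" unfolding a2_def using accept_nonneg q1 by auto
  have a2l: "1 \<le> a2 * (1 + (1 - q))" unfolding a2_def using accept_lower1[of "1-q"] q1 by simp
  have c: "q * (M * a2) \<le> q * (v * A * a1)"
  proof (cases "q = 0")
    case False
    hence "M * a2 \<le> v * A * a1" using cq q0
      unfolding accLL_def accLH_def M_def A_def a1_def a2_def mu_def lam_def by auto
    thus ?thesis using q0 by (intro mult_left_mono) auto
  qed simp
  have core': "v + r \<le> 2 * v * (1 - A) + (v + 1) * (A * (q * r * a1)) + (v + 1) * (r * (1 - M))
     + 2 * (r * M * ((1 - q) * a2))"
    by (rule core[OF A0 A1 M0 M1 q0 q1 assms(1) v1 a1p a2p a2l c])
  have w: "welfare n r v K \<sigma> q pH pL = real n * (2 * v * (1 - A) + (v + 1) * (A * (q * r * a1))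
     + (v + 1) * (r * (1 - M)) + 2 * (r * M * ((1 - q) * a2)))"
    unfolding welfare_def Let_def lam_def[symmetric] mu_def[symmetric] A_def[symmetric]
      M_def[symmetric] a1_def a2_def
    using accept_mul[OF qr] accept_mul[of "1 - q"] q1 by (simp add: mult.assoc)
  have sw: "exp 1 / (2 * (exp 1 - 1)) * simple_welfare n r v = real n * (v + r)"
    unfolding simple_welfare_def using e1 by (simp add: field_simps)
  show ?thesis unfolding w sw using core' by (intro mult_left_mono) auto
qed

end
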